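(* Let $d\ge1$, $X=\{1,\dots,d+1\}$, integers $0\le m_1<\dots<m_{d+1}$, and $P$ the $d$-permutohedron, the convex hull of $\{\sum_i m_{i\pi}v_i:\pi\in\mathfrak S_{d+1}\}\subset\mathbb R^{d+1}$. For $\varnothing\ne J\subsetneq X$ let $a_J$ be the facet of $P$ which is the convex hull of the vertices $\sum_i m_{i\pi}v_i$ with $\sum_{j\in J}m_{j\pi}=m_1+\dots+m_{|J|}$. Then the face monoid of $P$ has a presentation with generators $a_J$ ($\varnothing\ne J\subsetneq X$) and relations $a_J^2=a_J$ for all $J$; $a_Ja_K=a_Ka_J$ for all $J,K$; and $a_Ja_K=a_Ja_Ka_L$ for all $J,K$ with $J\ne J\cap K\ne K$ and all $L$.
   Context: $v_1,\dots,v_{d+1}$ is the standard basis of $\mathbb R^{d+1}$. The face monoid of a polytope is the set of its faces (including the polytope itself and $\varnothing$) under intersection. *)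

theory Defs
  imports "HOL-Analysis.Analysis"
begin

text \<open>Coordinates of the ambient space are indexed by a finite type 'n with
  CARD('n) = d+1; a permutation is a bijection from the coordinate set onto
  the label set {1..d+1}.\<close>

definition perm_vertex :: "(nat \<Rightarrow> int) \<Rightarrow> ('n::finite \<Rightarrow> nat) \<Rightarrow> real ^ 'n" where
  "perm_vertex m s = (\<chi> i. real_of_int (m (s i)))"

definition perm_labellings :: "('n::finite \<Rightarrow> nat) set" where
  "perm_labellings = {s. bij_betw s (UNIV :: 'n set) {1..CARD('n)}}"

definition permutohedron :: "(nat \<Rightarrow> int) \<Rightarrow> (real ^ 'n::finite) set" where
  "permutohedron m = convex hull (perm_vertex m ` perm_labellings)"

definition perm_facet :: "(nat \<Rightarrow> int) \<Rightarrow> 'n::finite set \<Rightarrow> (real ^ 'n) set" where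
  "perm_facet m J = convex hull (perm_vertex m `
     {s \<in> perm_labellings. (\<Sum>j\<in>J. m (s j)) = (\<Sum>k=1..card J. m k)})"

definition perm_gens :: "'n::finite set set" where
  "perm_gens = {J. J \<noteq> {} \<and> J \<noteq> UNIV}"

text \<open>Evaluation of a word in the generators in the face monoid (product = intersection,
  identity = P).\<close>
definition perm_eval :: "(nat \<Rightarrow> int) \<Rightarrow> 'n::finite set list \<Rightarrow> (real ^ 'n) set" where
  "perm_eval m w = permutohedron m \<inter> \<Inter> (perm_facet m ` set w)"

inductive perm_relator :: "'n::finite set list \<Rightarrow> 'n set list \<Rightarrow> bool" where
  idem: "J \<in> perm_gens \<Longrightarrow> perm_relator [J, J] [J]"
| comm: "J \<in> perm_gens \<Longrightarrow> K \<in> perm_gens \<Longrightarrow> perm_relator [J, K] [K, J]"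
| absorb: "J \<in> perm_gens \<Longrightarrow> K \<in> perm_gens \<Longrightarrow> L \<in> perm_gens \<Longrightarrow>
     J \<noteq> J \<inter> K \<Longrightarrow> J \<inter> K \<noteq> K \<Longrightarrow> perm_relator [J, K] [J, K, L]"

inductive perm_cong :: "'n::finite set list \<Rightarrow> 'n set list \<Rightarrow> bool" where
  refl: "set w \<subseteq> perm_gens \<Longrightarrow> perm_cong w w"
| step: "perm_relator l r \<Longrightarrow> set u \<subseteq> perm_gens \<Longrightarrow> set v \<subseteq> perm_gens \<Longrightarrow>
     perm_cong (u @ l @ v) (u @ r @ v)"
| sym: "perm_cong w w' \<Longrightarrow> perm_cong w' w"
| trans: "perm_cong w w' \<Longrightarrow> perm_cong w' w'' \<Longrightarrow> perm_cong w w''"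

end

theory Submission
  imports Defs
begin

lemma sum_min_aux:
  fixes m :: "nat \<Rightarrow> int"
  assumes mono: "\<And>i j. 1 \<le> i \<Longrightarrow> i < j \<Longrightarrow> j \<le> N \<Longrightarrow> m i < m j"
    and A: "A \<subseteq> {1..N}"
  shows "A \<noteq> {1..card A} \<Longrightarrow> (\<Sum>k=1..card A. m k) < sum m A"
proof -
  assume ne: "A \<noteq> {1..card A}"
  define B where "B = {1..card A}"
  define c where "c = card A"
  have fA: "finite A" using A finite_subset by blast
  have fB: "finite B" by (simp add: B_def)
  have cB: "card B = c" by (simp add: B_def c_def)
  have sA: "sum m A = sum m (A \<inter> B) + sum m (A - B)"
    using sum.Int_Diff[OF fA] by blast
  have sB: "sum m B = sum m (A \<inter> B) + sum m (B - A)"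
    using sum.Int_Diff[OF fB, of m A] by (simp add: Int_commute)
  have cA: "card A = card (A \<inter> B) + card (A - B)"
    using card_Int_Diff[OF fA] by blast
  have cB2: "card B = card (A \<inter> B) + card (B - A)"
    using card_Int_Diff[OF fB, of A] by (simp add: Int_commute)
  have cc: "card (A - B) = card (B - A)" using cA cB2 cB c_def by simp
  have D1: "A - B \<noteq> {}"
  proof
    assume "A - B = {}"
    then have "A \<subseteq> B" by blast
    then have "A = B" using card_subset_eq[OF fB] cB c_def by metis
    then show False using ne B_def by simp
  qed
  have "card (A - B) > 0" using D1 fA by (simp add: card_gt_0_iff)
  then have "card (B - A) > 0" using cc by simp
  then have D2: "B - A \<noteq> {}" by (metis card.empty less_irrefl)
  obtain x where x: "x \<in> A - B" using D1 by blast
  have cN: "c + 1 \<le> N" using x A B_def c_def by auto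
  have h1: "m y < m (c+1)" if y: "y \<in> B - A" for y
  proof -
    have "1 \<le> y" "y < c + 1" using y by (auto simp: B_def c_def)
    then show ?thesis using mono[of y "c+1"] cN by simp
  qed
  have h2: "\<And>y. y \<in> A - B \<Longrightarrow> m (c+1) \<le> m y"
  proof -
    fix y assume y: "y \<in> A - B"
    then have "c + 1 \<le> y" "y \<le> N" using A B_def c_def by auto
    then show "m (c+1) \<le> m y" using mono[of "c+1" y] by (cases "y = c+1") auto
  qed
  have "sum m (B - A) < (\<Sum>y\<in>B - A. m (c+1))"
    by (rule sum_strict_mono) (use fB D2 h1 in auto)
  also have "\<dots> = (\<Sum>y\<in>A - B. m (c+1))" using cc by simp
  also have "\<dots> \<le> sum m (A - B)" by (rule sum_mono) (use h2 in auto)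
  finally show ?thesis using sA sB B_def by simp
qed

definition init :: "('n \<Rightarrow> nat) \<Rightarrow> 'n set \<Rightarrow> bool" where
  "init s J \<longleftrightarrow> (\<forall>i\<in>J. \<forall>j. j \<notin> J \<longrightarrow> s i < s j)"

lemma lab_bij: "s \<in> perm_labellings \<Longrightarrow> bij_betw s (UNIV::'n::finite set) {1..CARD('n)}"
  by (simp add: perm_labellings_def)

lemma init_iff:
  assumes s: "s \<in> (perm_labellings :: ('n::finite \<Rightarrow> nat) set)"
  shows "init s J \<longleftrightarrow> s ` J = {1..card J}"
proof
  have b: "bij_betw s (UNIV::'n set) {1..CARD('n)}" using s by (simp add: perm_labellings_def)
  have inj: "inj s" using b bij_betw_imp_inj_on by blast
  have im: "s ` UNIV = {1..CARD('n)}" using b bij_betw_imp_surj_on by blast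
  have cJ: "card (s ` J) = card J" using inj card_image inj_on_subset by blast
  assume I: "init s J"
  have sub: "s ` J \<subseteq> {1..card J}"
  proof
    fix k assume "k \<in> s ` J"
    then obtain i where i: "i \<in> J" "k = s i" by blast
    have "{1..s i} \<subseteq> s ` J"
    proof
      fix l assume l: "l \<in> {1..s i}"
      have "s i \<in> {1..CARD('n)}" using im by blast
      then have "l \<in> s ` UNIV" using l im by auto
      then obtain j where "l = s j" by blast
      moreover have "j \<in> J"
      proof (rule ccontr)
        assume "j \<notin> J"
        then have "s i < s j" using I i unfolding init_def by blast
        then show False using l \<open>l = s j\<close> by simp
      qed
      ultimately show "l \<in> s ` J" by blast
    qed
    then have "card {1..s i} \<le> card (s ` J)" using card_mono[of "s ` J" "{1..s i}"] by simp
    moreover have "s i \<in> {1..CARD('n)}" using im by blast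
    ultimately show "k \<in> {1..card J}" using cJ i by simp
  qed
  show "s ` J = {1..card J}" using card_subset_eq[OF _ sub] cJ by simp
next
  have b: "bij_betw s (UNIV::'n set) {1..CARD('n)}" using s by (simp add: perm_labellings_def)
  have inj: "inj s" using b bij_betw_imp_inj_on by blast
  have im: "s ` UNIV = {1..CARD('n)}" using b bij_betw_imp_surj_on by blast
  assume E: "s ` J = {1..card J}"
  show "init s J" unfolding init_def
  proof (intro ballI allI impI)
    fix i j assume i: "i \<in> J" and j: "j \<notin> J"
    have "s i \<le> card J" using E i by auto
    moreover have "s j \<notin> s ` J" using inj j by (simp add: inj_image_mem_iff)
    moreover have "1 \<le> s j" using im by auto
    ultimately show "s i < s j" using E by auto
  qed
qed

lemma facet_sum:
  fixes m :: "nat \<Rightarrow> int"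
  assumes mono: "\<And>i j. 1 \<le> i \<Longrightarrow> i < j \<Longrightarrow> j \<le> CARD('n) \<Longrightarrow> m i < m j"
    and s: "s \<in> (perm_labellings :: ('n::finite \<Rightarrow> nat) set)"
  shows "(\<Sum>k=1..card J. m k) \<le> (\<Sum>j\<in>J. m (s j))"
    and "(\<Sum>j\<in>J. m (s j)) = (\<Sum>k=1..card J. m k) \<longleftrightarrow> init s J"
proof -
  have b: "bij_betw s (UNIV::'n set) {1..CARD('n)}" using s by (simp add: perm_labellings_def)
  have inj: "inj s" using b bij_betw_imp_inj_on by blast
  have im: "s ` UNIV = {1..CARD('n)}" using b bij_betw_imp_surj_on by blast
  have cJ: "card (s ` J) = card J" using inj card_image inj_on_subset by blast
  have injJ: "inj_on s J" using inj inj_on_subset by blast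
  have eq: "(\<Sum>j\<in>J. m (s j)) = sum m (s ` J)"
    using sum.reindex[OF injJ, of m] by (simp add: o_def)
  have sub: "s ` J \<subseteq> {1..CARD('n)}" using im by blast
  have L: "s ` J \<noteq> {1..card J} \<Longrightarrow> (\<Sum>k=1..card J. m k) < sum m (s ` J)"
    using sum_min_aux[OF mono sub] cJ by simp
  show "(\<Sum>k=1..card J. m k) \<le> (\<Sum>j\<in>J. m (s j))"
  proof (cases "s ` J = {1..card J}")
    case True then show ?thesis unfolding eq by simp
  next
    case False then show ?thesis using L[OF False] unfolding eq by simp
  qed
  show "(\<Sum>j\<in>J. m (s j)) = (\<Sum>k=1..card J. m k) \<longleftrightarrow> init s J"
  proof (cases "s ` J = {1..card J}")
    case True then show ?thesis unfolding eq init_iff[OF s] by simp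
  next
    case False then show ?thesis using L[OF False] unfolding eq init_iff[OF s] by simp
  qed
qed


lemma exists_lab:
  fixes c :: "'n::finite \<Rightarrow> nat"
  shows "\<exists>s\<in>(perm_labellings :: ('n \<Rightarrow> nat) set). \<forall>i j. c i < c j \<longrightarrow> s i < s j"
proof -
  define N where "N = CARD('n)"
  have N0: "0 < N" by (simp add: N_def)
  obtain e where e: "bij_betw e (UNIV::'n set) {0..<N}"
    using ex_bij_betw_finite_nat[of "UNIV::'n set"] by (auto simp: N_def)
  have einj: "inj e" using e bij_betw_imp_inj_on by blast
  have elt: "e i < N" for i using e bij_betw_apply by fastforce
  define key where "key i = c i * N + e i" for i
  have kdiv: "key i div N = c i" for i using elt[of i] N0 by (simp add: key_def)
  have kmod: "key i mod N = e i" for i using elt[of i] by (simp add: key_def)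
  have kinj: "inj key"
  proof (rule injI)
    fix i j assume "key i = key j"
    then have "e i = e j" using kmod by metis
    then show "i = j" using einj by (simp add: inj_eq)
  qed
  have kmono: "key i < key j" if "c i < c j" for i j
  proof -
    have "key i < c i * N + N" using elt[of i] by (simp add: key_def)
    also have "\<dots> = (c i + 1) * N" by simp
    also have "\<dots> \<le> c j * N" using that by (intro mult_right_mono) auto
    also have "\<dots> \<le> key j" by (simp add: key_def)
    finally show ?thesis .
  qed
  define s where "s i = card {j. key j \<le> key i}" for i
  have smono: "s i < s j" if "key i < key j" for i j
  proof -
    have m1: "j \<in> {k. key k \<le> key j}" "j \<notin> {k. key k \<le> key i}" using that by auto
    have "{k. key k \<le> key i} \<subset> {k. key k \<le> key j}"
    proof
      show "{k. key k \<le> key i} \<subseteq> {k. key k \<le> key j}" using that by auto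
      show "{k. key k \<le> key i} \<noteq> {k. key k \<le> key j}" using m1 by blast
    qed
    then show ?thesis unfolding s_def by (intro psubset_card_mono) auto
  qed
  have sinj: "inj s"
  proof (rule injI)
    fix i j assume eq: "s i = s j"
    show "i = j"
    proof (rule ccontr)
      assume "i \<noteq> j"
      then have "key i \<noteq> key j" using kinj by (simp add: inj_eq)
      then have "key i < key j \<or> key j < key i" by arith
      then show False using smono eq by fastforce
    qed
  qed
  have srange: "s i \<in> {1..N}" for i
  proof -
    have "i \<in> {j. key j \<le> key i}" by simp
    then have "1 \<le> s i" unfolding s_def
      by (metis One_nat_def Suc_leI card_gt_0_iff empty_iff finite)
    moreover have "s i \<le> N" unfolding s_def N_def
      by (intro card_mono) auto
    ultimately show ?thesis by simp
  qed
  have "s ` UNIV = {1..N}"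
  proof (rule card_subset_eq)
    show "s ` UNIV \<subseteq> {1..N}" using srange by blast
    show "card (s ` UNIV) = card {1..N}" using card_image[OF sinj] by (simp add: N_def)
  qed simp
  then have "bij_betw s (UNIV::'n set) {1..N}" using sinj by (simp add: bij_betw_def)
  then have "s \<in> perm_labellings" by (simp add: perm_labellings_def N_def)
  moreover have "\<forall>i j. c i < c j \<longrightarrow> s i < s j" using kmono smono by blast
  ultimately show ?thesis by blast
qed

definition chainS :: "'n set set \<Rightarrow> bool" where
  "chainS S \<longleftrightarrow> (\<forall>J\<in>S. \<forall>K\<in>S. J \<subseteq> K \<or> K \<subseteq> J)"

definition Lset :: "'n::finite set set \<Rightarrow> ('n \<Rightarrow> nat) set" where
  "Lset S = {s \<in> perm_labellings. \<forall>J\<in>S. init s J}"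

lemma Lset_antimono: "S \<subseteq> T \<Longrightarrow> Lset T \<subseteq> Lset S"
  unfolding Lset_def by blast

lemma nonchain_empty: "\<not> chainS S \<Longrightarrow> Lset S = {}"
proof -
  assume "\<not> chainS S"
  then obtain J K where JK: "J \<in> S" "K \<in> S" "\<not> J \<subseteq> K" "\<not> K \<subseteq> J"
    unfolding chainS_def by blast
  then obtain i j where ij: "i \<in> J" "i \<notin> K" "j \<in> K" "j \<notin> J" by blast
  show "Lset S = {}"
  proof (rule ccontr)
    assume "Lset S \<noteq> {}"
    then obtain s where "init s J" "init s K" using JK unfolding Lset_def by blast
    then have "s i < s j" "s j < s i" using ij unfolding init_def by blast+
    then show False by simp
  qed
qed

lemma chain_nonempty:
  fixes S :: "'n::finite set set"
  assumes ch: "chainS S"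
  shows "Lset S \<noteq> {}"
proof -
  define c where "c i = card {K\<in>S. i \<notin> K}" for i
  obtain s where s: "s \<in> perm_labellings" and sm: "\<And>i j. c i < c j \<Longrightarrow> s i < s j"
    using exists_lab[of c] by blast
  have "init s K" if K: "K \<in> S" for K
    unfolding init_def
  proof (intro ballI allI impI)
    fix i j assume i: "i \<in> K" and j: "j \<notin> K"
    have "{K'\<in>S. i \<notin> K'} \<subset> {K'\<in>S. j \<notin> K'}"
    proof
      show "{K'\<in>S. i \<notin> K'} \<subseteq> {K'\<in>S. j \<notin> K'}"
        using ch K i j unfolding chainS_def by blast
      show "{K'\<in>S. i \<notin> K'} \<noteq> {K'\<in>S. j \<notin> K'}" using K i j by blast
    qed
    then have "c i < c j" unfolding c_def by (intro psubset_card_mono) auto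
    then show "s i < s j" by (rule sm)
  qed
  then have "s \<in> Lset S" using s unfolding Lset_def by blast
  then show ?thesis by blast
qed

lemma chain_Inter_Union:
  assumes "finite A" "A \<noteq> {}" "chainS A"
  shows "\<Inter>A \<in> A \<and> \<Union>A \<in> A"
  using assms
proof (induction A rule: finite_ne_induct)
  case (singleton x) then show ?case by simp
next
  case (insert x F)
  have ch: "chainS F" using insert.prems unfolding chainS_def by blast
  then have IH: "\<Inter>F \<in> F" "\<Union>F \<in> F" using insert.IH by auto
  have c1: "x \<subseteq> \<Inter>F \<or> \<Inter>F \<subseteq> x" using insert.prems IH unfolding chainS_def by blast
  have c2: "x \<subseteq> \<Union>F \<or> \<Union>F \<subseteq> x" using insert.prems IH unfolding chainS_def by blast
  have "\<Inter>(insert x F) \<in> insert x F" using c1 IH by (auto simp: Int_absorb1 Int_absorb2)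
  moreover have "\<Union>(insert x F) \<in> insert x F" using c2 IH by (auto simp: Un_absorb1 Un_absorb2)
  ultimately show ?case by blast
qed

lemma chain_separate:
  fixes S :: "'n::finite set set"
  assumes ch: "chainS S" and JS: "J \<notin> S" and Jne: "J \<noteq> {}" and JU: "J \<noteq> UNIV"
  shows "\<exists>s\<in>Lset S. \<not> init s J"
proof (cases "\<forall>K\<in>S. J \<subseteq> K \<or> K \<subseteq> J")
  case False
  then have "\<not> chainS (insert J S)" unfolding chainS_def by blast
  then have E: "Lset (insert J S) = {}" by (rule nonchain_empty)
  obtain s where s: "s \<in> Lset S" using chain_nonempty[OF ch] by blast
  have "\<not> init s J"
  proof
    assume "init s J"
    then have "s \<in> Lset (insert J S)" using s unfolding Lset_def by blast
    then show False using E by blast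
  qed
  then show ?thesis using s by blast
next
  case True
  define A where "A = {K\<in>S. J \<subseteq> K}"
  define B where "B = {K\<in>S. K \<subseteq> J}"
  have finS: "finite S" by (rule finite_subset[of _ UNIV]) auto
  have chA: "chainS A" "chainS B" using ch unfolding A_def B_def chainS_def by blast+
  have "\<exists>j. j \<in> \<Inter>A \<and> j \<notin> J"
  proof (cases "A = {}")
    case True then show ?thesis using JU by auto
  next
    case False
    then have "\<Inter>A \<in> A" using chain_Inter_Union[OF _ False chA(1)] finS unfolding A_def by auto
    then have "\<Inter>A \<noteq> J" "J \<subseteq> \<Inter>A" using JS unfolding A_def by auto
    then show ?thesis by blast
  qed
  then obtain j where j: "j \<in> \<Inter>A" "j \<notin> J" by blast
  have "\<exists>i. i \<in> J \<and> i \<notin> \<Union>B"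
  proof (cases "B = {}")
    case True then show ?thesis using Jne by auto
  next
    case False
    then have "\<Union>B \<in> B" using chain_Inter_Union[OF _ False chA(2)] finS unfolding B_def by auto
    then have "\<Union>B \<noteq> J" "\<Union>B \<subseteq> J" using JS unfolding B_def by auto
    then show ?thesis by blast
  qed
  then obtain i where i: "i \<in> J" "i \<notin> \<Union>B" by blast
  define c0 where "c0 k = card {K\<in>S. k \<notin> K}" for k
  define c where "c k = 2 * c0 k + (if k \<in> J then 1 else 0)" for k
  obtain s where s: "s \<in> perm_labellings" and sm: "\<And>a b. c a < c b \<Longrightarrow> s a < s b"
    using exists_lab[of c] by blast
  have init: "init s K" if K: "K \<in> S" for K
    unfolding init_def
  proof (intro ballI allI impI)
    fix a b assume a: "a \<in> K" and b: "b \<notin> K"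
    have "{K'\<in>S. a \<notin> K'} \<subset> {K'\<in>S. b \<notin> K'}"
    proof
      show "{K'\<in>S. a \<notin> K'} \<subseteq> {K'\<in>S. b \<notin> K'}"
        using ch K a b unfolding chainS_def by blast
      show "{K'\<in>S. a \<notin> K'} \<noteq> {K'\<in>S. b \<notin> K'}" using K a b by blast
    qed
    then have "c0 a < c0 b" unfolding c0_def by (intro psubset_card_mono) auto
    then have "c a < c b" unfolding c_def by auto
    then show "s a < s b" by (rule sm)
  qed
  have "{K\<in>S. j \<notin> K} \<subseteq> {K\<in>S. i \<notin> K}"
  proof safe
    fix K assume K: "K \<in> S" "j \<notin> K" "i \<in> K"
    have "K \<notin> A" using K j by auto
    then have "K \<subseteq> J" using True K unfolding A_def by blast
    then have "K \<in> B" using K unfolding B_def by blast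
    then show False using i K by blast
  qed
  then have "c0 j \<le> c0 i" unfolding c0_def by (intro card_mono) auto
  then have "c j < c i" unfolding c_def using i j by auto
  then have "s j < s i" by (rule sm)
  then have "\<not> init s J" using i j unfolding init_def by force
  moreover have "s \<in> Lset S" using s init unfolding Lset_def by blast
  ultimately show ?thesis by blast
qed


lemma hull_face_eq:
  fixes V :: "'a::euclidean_space set"
  assumes fin: "finite V" and le: "\<And>v. v \<in> V \<Longrightarrow> a \<bullet> v \<le> b"
  shows "convex hull V \<inter> {x. a \<bullet> x = b} = convex hull {v\<in>V. a \<bullet> v = b}"
proof
  show "convex hull {v\<in>V. a \<bullet> v = b} \<subseteq> convex hull V \<inter> {x. a \<bullet> x = b}"
  proof (rule Int_greatest)
    show "convex hull {v\<in>V. a \<bullet> v = b} \<subseteq> convex hull V" by (rule hull_mono) blast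
    show "convex hull {v\<in>V. a \<bullet> v = b} \<subseteq> {x. a \<bullet> x = b}"
      by (rule hull_minimal) (auto simp: convex_hyperplane)
  qed
next
  have hs: "convex hull V \<subseteq> {x. a \<bullet> x \<le> b}"
    by (rule hull_minimal) (use le in \<open>auto simp: convex_halfspace_le\<close>)
  have fc: "(convex hull V \<inter> {x. a \<bullet> x = b}) face_of convex hull V"
    by (rule face_of_Int_supporting_hyperplane_le) (use hs in \<open>auto simp: convex_convex_hull\<close>)
  obtain S' where S': "S' \<subseteq> V" "convex hull V \<inter> {x. a \<bullet> x = b} = convex hull S'"
    using face_of_convex_hull_subset[OF finite_imp_compact[OF fin] fc] by blast
  have "S' \<subseteq> convex hull V \<inter> {x. a \<bullet> x = b}" unfolding S'(2) by (rule hull_subset)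
  then have sub: "S' \<subseteq> {v\<in>V. a \<bullet> v = b}" using S'(1) by blast
  show "convex hull V \<inter> {x. a \<bullet> x = b} \<subseteq> convex hull {v\<in>V. a \<bullet> v = b}"
    unfolding S'(2) by (rule hull_mono[OF sub])
qed

lemma finite_labs: "finite (perm_labellings :: ('n::finite \<Rightarrow> nat) set)"
proof -
  have "perm_labellings \<subseteq> PiE (UNIV::'n set) (\<lambda>_. {1..CARD('n)})"
    unfolding perm_labellings_def PiE_def extensional_def
    using bij_betw_apply by fastforce
  moreover have "finite (PiE (UNIV::'n set) (\<lambda>_. {1..CARD('n)}))" by (intro finite_PiE) auto
  ultimately show ?thesis using finite_subset by blast
qed

definition ind :: "'n::finite set \<Rightarrow> real ^ 'n" where
  "ind J = (\<chi> i. if i \<in> J then 1 else 0)"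

definition cJ :: "(nat \<Rightarrow> int) \<Rightarrow> 'n::finite set \<Rightarrow> real" where
  "cJ m J = real_of_int (\<Sum>k=1..card J. m k)"

lemma inner_ind: "ind J \<bullet> perm_vertex m s = real_of_int (\<Sum>j\<in>J. m (s j))"
proof -
  have "ind J \<bullet> perm_vertex m s = (\<Sum>i\<in>UNIV. if i \<in> J then real_of_int (m (s i)) else 0)"
    unfolding inner_vec_def ind_def perm_vertex_def by (intro sum.cong) auto
  also have "\<dots> = (\<Sum>i\<in>J. real_of_int (m (s i)))"
    by (simp add: sum.If_cases)
  finally show ?thesis by simp
qed

lemma vertex_ge:
  fixes m :: "nat \<Rightarrow> int"
  assumes mono: "\<And>i j. 1 \<le> i \<Longrightarrow> i < j \<Longrightarrow> j \<le> CARD('n) \<Longrightarrow> m i < m j"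
    and s: "s \<in> (perm_labellings :: ('n::finite \<Rightarrow> nat) set)"
  shows "cJ m J \<le> ind J \<bullet> perm_vertex m s"
    and "ind J \<bullet> perm_vertex m s = cJ m J \<longleftrightarrow> init s J"
proof -
  have a: "(\<Sum>k=1..card J. m k) \<le> (\<Sum>j\<in>J. m (s j))" by (rule facet_sum(1)[where m=m, OF mono s])
  have b: "(\<Sum>j\<in>J. m (s j)) = (\<Sum>k=1..card J. m k) \<longleftrightarrow> init s J" by (rule facet_sum(2)[where m=m, OF mono s])
  show "cJ m J \<le> ind J \<bullet> perm_vertex m s" unfolding inner_ind cJ_def using a by linarith
  show "ind J \<bullet> perm_vertex m s = cJ m J \<longleftrightarrow> init s J" unfolding inner_ind cJ_def using b
    by (metis of_int_eq_iff)
qed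

lemma P_ge:
  fixes m :: "nat \<Rightarrow> int"
  assumes mono: "\<And>i j. 1 \<le> i \<Longrightarrow> i < j \<Longrightarrow> j \<le> CARD('n) \<Longrightarrow> m i < m j"
    and x: "x \<in> (permutohedron m :: (real ^ 'n::finite) set)"
  shows "cJ m J \<le> ind J \<bullet> x"
proof -
  have "permutohedron m \<subseteq> {x :: real^'n. cJ m J \<le> ind J \<bullet> x}"
    unfolding permutohedron_def
    by (rule hull_minimal) (use vertex_ge(1)[where m=m, OF mono] in \<open>auto simp: convex_halfspace_ge\<close>)
  then show ?thesis using x by blast
qed

lemma sum_ge_eq:
  fixes f g :: "'a \<Rightarrow> real"
  assumes "finite S" "\<And>J. J \<in> S \<Longrightarrow> g J \<le> f J"
  shows "sum f S = sum g S \<longleftrightarrow> (\<forall>J\<in>S. f J = g J)"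
proof -
  have "sum f S = sum g S \<longleftrightarrow> (\<Sum>J\<in>S. f J - g J) = 0" by (simp add: sum_subtractf)
  also have "\<dots> \<longleftrightarrow> (\<forall>J\<in>S. f J - g J = 0)"
    using assms by (intro sum_nonneg_eq_0_iff) auto
  finally show ?thesis by simp
qed

lemma eval_gen:
  fixes m :: "nat \<Rightarrow> int" and S :: "'n::finite set set"
  assumes mono: "\<And>i j. 1 \<le> i \<Longrightarrow> i < j \<Longrightarrow> j \<le> CARD('n) \<Longrightarrow> m i < m j"
  shows "permutohedron m \<inter> {x. \<forall>J\<in>S. ind J \<bullet> x = cJ m J} = convex hull (perm_vertex m ` Lset S)"
proof -
  have finS: "finite S" by (rule finite_subset[of _ UNIV]) auto
  define E where "E = (\<Sum>J\<in>S. ind J)"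
  define C where "C = (\<Sum>J\<in>S. cJ m J)"
  have key: "(\<forall>J\<in>S. ind J \<bullet> x = cJ m J) \<longleftrightarrow> (-E) \<bullet> x = -C"
    if "\<And>J. cJ m J \<le> ind J \<bullet> x" for x
  proof -
    have "(-E) \<bullet> x = -C \<longleftrightarrow> (\<Sum>J\<in>S. ind J \<bullet> x) = (\<Sum>J\<in>S. cJ m J)"
      unfolding E_def C_def by (simp add: inner_sum_left)
    also have "\<dots> \<longleftrightarrow> (\<forall>J\<in>S. ind J \<bullet> x = cJ m J)"
      by (rule sum_ge_eq[OF finS]) (use that in auto)
    finally show ?thesis by simp
  qed
  have "permutohedron m \<inter> {x. \<forall>J\<in>S. ind J \<bullet> x = cJ m J}
        = permutohedron m \<inter> {x. (-E) \<bullet> x = -C}"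
    using key P_ge[where m=m, OF mono] by blast
  also have "\<dots> = convex hull {v\<in>perm_vertex m ` perm_labellings. (-E) \<bullet> v = -C}"
    unfolding permutohedron_def
  proof (rule hull_face_eq)
    show "finite (perm_vertex m ` perm_labellings)" using finite_labs by blast
    fix v assume "v \<in> perm_vertex m ` (perm_labellings :: ('n \<Rightarrow> nat) set)"
    then obtain s where s: "s \<in> perm_labellings" "v = perm_vertex m s" by blast
    have "\<forall>J\<in>S. cJ m J \<le> ind J \<bullet> v" using vertex_ge(1)[where m=m, OF mono s(1)] s(2) by blast
    then have "C \<le> E \<bullet> v" unfolding E_def C_def inner_sum_left by (intro sum_mono) auto
    then show "(-E) \<bullet> v \<le> -C" by simp
  qed
  also have "{v\<in>perm_vertex m ` perm_labellings. (-E) \<bullet> v = -C} = perm_vertex m ` Lset S"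
  proof safe
    fix s assume s: "s \<in> (perm_labellings :: ('n \<Rightarrow> nat) set)" and eq: "(-E) \<bullet> perm_vertex m s = -C"
    then have "\<forall>J\<in>S. ind J \<bullet> perm_vertex m s = cJ m J" using key vertex_ge(1)[where m=m, OF mono s] by blast
    then have "s \<in> Lset S" using s vertex_ge(2)[where m=m, OF mono s] unfolding Lset_def by blast
    then show "perm_vertex m s \<in> perm_vertex m ` Lset S" by blast
  next
    fix s assume "s \<in> Lset S"
    then have s: "s \<in> perm_labellings" and i: "\<forall>J\<in>S. init s J" unfolding Lset_def by auto
    then show "perm_vertex m s \<in> perm_vertex m ` perm_labellings" by blast
    have "\<forall>J\<in>S. ind J \<bullet> perm_vertex m s = cJ m J" using i vertex_ge(2)[where m=m, OF mono s] by blast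
    then show "(-E) \<bullet> perm_vertex m s = -C" using key vertex_ge(1)[where m=m, OF mono s] by blast
  qed
  finally show ?thesis .
qed

lemma facet_eq:
  fixes m :: "nat \<Rightarrow> int"
  assumes mono: "\<And>i j. 1 \<le> i \<Longrightarrow> i < j \<Longrightarrow> j \<le> CARD('n) \<Longrightarrow> m i < m j"
  shows "perm_facet m (J :: 'n::finite set) = permutohedron m \<inter> {x. ind J \<bullet> x = cJ m J}"
proof -
  have "{s \<in> perm_labellings. (\<Sum>j\<in>J. m (s j)) = (\<Sum>k = 1..card J. m k)} = Lset {J}"
    unfolding Lset_def using facet_sum(2)[where m=m, OF mono] by auto
  then have "perm_facet m J = convex hull (perm_vertex m ` Lset {J})"
    unfolding perm_facet_def by simp
  also have "\<dots> = permutohedron m \<inter> {x. \<forall>K\<in>{J}. ind K \<bullet> x = cJ m K}"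
    using eval_gen[where m=m, OF mono, of "{J}"] by simp
  finally show ?thesis by simp
qed

lemma eval_eq:
  fixes m :: "nat \<Rightarrow> int"
  assumes mono: "\<And>i j. 1 \<le> i \<Longrightarrow> i < j \<Longrightarrow> j \<le> CARD('n) \<Longrightarrow> m i < m j"
  shows "perm_eval m (w :: 'n::finite set list) = convex hull (perm_vertex m ` Lset (set w))"
proof -
  have "perm_eval m w = permutohedron m \<inter> {x. \<forall>J\<in>set w. ind J \<bullet> x = cJ m J}"
  proof -
    have fe: "perm_facet m J = permutohedron m \<inter> {x. ind J \<bullet> x = cJ m J}" for J :: "'n set"
      by (rule facet_eq[where m=m, OF mono])
    show ?thesis unfolding perm_eval_def fe by auto
  qed
  then show ?thesis using eval_gen[where m=m, OF mono] by simp
qed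


lemma vtx_inj:
  fixes m :: "nat \<Rightarrow> int"
  assumes mono: "\<And>i j. 1 \<le> i \<Longrightarrow> i < j \<Longrightarrow> j \<le> CARD('n) \<Longrightarrow> m i < m j"
    and s: "s \<in> (perm_labellings :: ('n::finite \<Rightarrow> nat) set)" and s': "s' \<in> perm_labellings"
    and eq: "perm_vertex m s = perm_vertex m s'"
  shows "s = s'"
proof
  fix i
  have "perm_vertex m s $ i = perm_vertex m s' $ i" using eq by simp
  then have mi: "m (s i) = m (s' i)" by (simp add: perm_vertex_def)
  have r: "s i \<in> {1..CARD('n)}" "s' i \<in> {1..CARD('n)}"
    using s s' unfolding perm_labellings_def using bij_betw_apply by fastforce+
  show "s i = s' i"
  proof (rule ccontr)
    assume "s i \<noteq> s' i"
    then have "s i < s' i \<or> s' i < s i" by arith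
    then show False using mono[of "s i" "s' i"] mono[of "s' i" "s i"] r mi by auto
  qed
qed

lemma vtx_sq:
  assumes s: "s \<in> (perm_labellings :: ('n::finite \<Rightarrow> nat) set)"
  shows "perm_vertex m s \<bullet> perm_vertex m s = (\<Sum>k\<in>{1..CARD('n)}. (real_of_int (m k))^2)"
proof -
  have b: "bij_betw s (UNIV::'n set) {1..CARD('n)}" using s by (simp add: perm_labellings_def)
  have "perm_vertex m s \<bullet> perm_vertex m s = (\<Sum>i\<in>UNIV. (\<lambda>k. (real_of_int (m k))^2) (s i))"
    unfolding inner_vec_def perm_vertex_def by (simp add: power2_eq_square)
  also have "\<dots> = (\<Sum>k\<in>{1..CARD('n)}. (real_of_int (m k))^2)"
    by (rule sum.reindex_bij_betw[OF b])
  finally show ?thesis .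
qed

lemma vtx_inner:
  assumes s: "s \<in> (perm_labellings :: ('n::finite \<Rightarrow> nat) set)" and s': "s' \<in> perm_labellings"
  shows "perm_vertex m s \<bullet> perm_vertex m s' \<le> perm_vertex m s \<bullet> perm_vertex m s"
    and "perm_vertex m s \<bullet> perm_vertex m s' = perm_vertex m s \<bullet> perm_vertex m s \<Longrightarrow>
         perm_vertex m s' = perm_vertex m s"
proof -
  define x where "x = perm_vertex m s"
  define y where "y = perm_vertex m s'"
  have xx: "x \<bullet> x = y \<bullet> y" unfolding x_def y_def using vtx_sq[OF s] vtx_sq[OF s'] by simp
  have d: "(x - y) \<bullet> (x - y) = 2 * (x \<bullet> x - x \<bullet> y)"
    using xx by (simp add: inner_diff_left inner_diff_right inner_commute)
  have "0 \<le> (x - y) \<bullet> (x - y)" by simp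
  then show "perm_vertex m s \<bullet> perm_vertex m s' \<le> perm_vertex m s \<bullet> perm_vertex m s"
    using d unfolding x_def y_def by simp
  assume "perm_vertex m s \<bullet> perm_vertex m s' = perm_vertex m s \<bullet> perm_vertex m s"
  then have "(x - y) \<bullet> (x - y) = 0" using d unfolding x_def y_def by simp
  then show "perm_vertex m s' = perm_vertex m s" unfolding x_def y_def by simp
qed

lemma hull_sub:
  fixes m :: "nat \<Rightarrow> int"
  assumes mono: "\<And>i j. 1 \<le> i \<Longrightarrow> i < j \<Longrightarrow> j \<le> CARD('n) \<Longrightarrow> m i < m j"
    and T1: "T1 \<subseteq> (perm_labellings :: ('n::finite \<Rightarrow> nat) set)" and T2: "T2 \<subseteq> perm_labellings"
    and eq: "convex hull (perm_vertex m ` T1) = convex hull (perm_vertex m ` T2)"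
  shows "T1 \<subseteq> T2"
proof
  fix s assume sT: "s \<in> T1"
  have s: "s \<in> perm_labellings" using sT T1 by blast
  define x where "x = perm_vertex m s"
  have "x \<in> perm_vertex m ` T1" using sT x_def by simp
  then have "x \<in> convex hull (perm_vertex m ` T1)" by (rule hull_subset[THEN subsetD])
  then have "x \<in> convex hull (perm_vertex m ` T2)" using eq by simp
  then have "x \<in> convex hull (perm_vertex m ` T2) \<inter> {y. x \<bullet> y = x \<bullet> x}" by simp
  also have "\<dots> = convex hull {v \<in> perm_vertex m ` T2. x \<bullet> v = x \<bullet> x}"
  proof (rule hull_face_eq)
    show "finite (perm_vertex m ` T2)" using finite_subset[OF T2 finite_labs] by blast
    fix v assume "v \<in> perm_vertex m ` T2"
    then obtain s' where "s' \<in> T2" "v = perm_vertex m s'" by blast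
    then show "x \<bullet> v \<le> x \<bullet> x" unfolding x_def using vtx_inner(1)[OF s, where m=m] T2 by blast
  qed
  finally have xin: "x \<in> convex hull {v \<in> perm_vertex m ` T2. x \<bullet> v = x \<bullet> x}" .
  have "{v \<in> perm_vertex m ` T2. x \<bullet> v = x \<bullet> x} \<noteq> {}"
  proof
    assume e: "{v \<in> perm_vertex m ` T2. x \<bullet> v = x \<bullet> x} = {}"
    show False using xin unfolding e by simp
  qed
  then obtain v where v: "v \<in> perm_vertex m ` T2" "x \<bullet> v = x \<bullet> x" by blast
  then obtain s' where s': "s' \<in> T2" "x \<bullet> perm_vertex m s' = x \<bullet> x" by blast
  have "perm_vertex m s' = x" using vtx_inner(2)[OF s, where s'=s' and m=m] s' T2 unfolding x_def by blast
  then have "s' = s" using vtx_inj[where m=m, OF mono] s s' T2 unfolding x_def by blast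
  then show "s \<in> T2" using s' by simp
qed


lemma relator_gens: "perm_relator l r \<Longrightarrow> set l \<subseteq> perm_gens \<and> set r \<subseteq> perm_gens"
  by (induction rule: perm_relator.induct) auto

lemma cong_gens: "perm_cong w w' \<Longrightarrow> set w \<subseteq> perm_gens \<and> set w' \<subseteq> perm_gens"
  by (induction rule: perm_cong.induct) (auto dest!: relator_gens)

lemma cong_ctx:
  assumes "perm_cong w w'" "set u \<subseteq> perm_gens" "set v \<subseteq> perm_gens"
  shows "perm_cong (u @ w @ v) (u @ w' @ v)"
  using assms
proof (induction rule: perm_cong.induct)
  case (refl w) then show ?case by (intro perm_cong.refl) auto
next
  case (step l r u' v')
  have "perm_cong ((u @ u') @ l @ (v' @ v)) ((u @ u') @ r @ (v' @ v))"
    by (rule perm_cong.step) (use step in auto)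
  then show ?case by simp
next
  case (sym w w') then show ?case by (blast intro: perm_cong.sym)
next
  case (trans w w' w'') then show ?case by (blast intro: perm_cong.trans)
qed

lemma cong_ctx_l: "perm_cong w w' \<Longrightarrow> set u \<subseteq> perm_gens \<Longrightarrow> perm_cong (u @ w) (u @ w')"
  using cong_ctx[of w w' u "[]"] by simp

lemma cong_ctx_r: "perm_cong w w' \<Longrightarrow> set v \<subseteq> perm_gens \<Longrightarrow> perm_cong (w @ v) (w' @ v)"
  using cong_ctx[of w w' "[]" v] by simp

lemma comm_cons: "set (x # w) \<subseteq> perm_gens \<Longrightarrow> perm_cong (x # w) (w @ [x])"
proof (induction w)
  case Nil then show ?case using perm_cong.refl[of "[x]"] by simp
next
  case (Cons y w)
  have g: "x \<in> perm_gens" "y \<in> perm_gens" "set w \<subseteq> perm_gens" using Cons.prems by auto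
  have "perm_cong ([] @ [x, y] @ w) ([] @ [y, x] @ w)"
    by (rule perm_cong.step) (use g in \<open>auto intro: perm_relator.comm\<close>)
  then have 1: "perm_cong (x # y # w) (y # x # w)" by simp
  have "perm_cong ([y] @ (x # w)) ([y] @ (w @ [x]))"
    by (rule cong_ctx_l) (use Cons g in auto)
  then have 2: "perm_cong (y # x # w) (y # w @ [x])" by simp
  show ?case using perm_cong.trans[OF 1 2] by simp
qed

lemma app_comm: "set a \<subseteq> perm_gens \<Longrightarrow> set b \<subseteq> perm_gens \<Longrightarrow> perm_cong (a @ b) (b @ a)"
proof (induction a)
  case Nil then show ?case by (auto intro: perm_cong.refl)
next
  case (Cons x a)
  have g: "x \<in> perm_gens" "set a \<subseteq> perm_gens" using Cons.prems by auto
  have 1: "perm_cong (x # (a @ b)) ((a @ b) @ [x])" by (rule comm_cons) (use Cons.prems in auto)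
  have 2: "perm_cong ((a @ b) @ [x]) ((b @ a) @ [x])" by (rule cong_ctx_r) (use Cons g in auto)
  have 3: "perm_cong (b @ (x # a)) (b @ (a @ [x]))" by (rule cong_ctx_l[OF comm_cons]) (use Cons.prems in auto)
  have 4: "perm_cong ((b @ a) @ [x]) (b @ (x # a))" using perm_cong.sym[OF 3] by simp
  show ?case using perm_cong.trans[OF perm_cong.trans[OF 1 2] 4] by simp
qed

lemma absorb_mem:
  assumes g: "set w \<subseteq> perm_gens" and x: "x \<in> set w"
  shows "perm_cong (x # w) w"
proof -
  obtain p q where w: "w = p @ x # q" using split_list[OF x] by blast
  have gp: "set p \<subseteq> perm_gens" "set q \<subseteq> perm_gens" "x \<in> perm_gens" using g w by auto
  have 1: "perm_cong ((x # p) @ (x # q)) ((p @ [x]) @ (x # q))"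
    by (rule cong_ctx_r[OF comm_cons]) (use gp in auto)
  have "perm_cong (p @ [x, x] @ q) (p @ [x] @ q)"
    by (rule perm_cong.step) (use gp in \<open>auto intro: perm_relator.idem\<close>)
  then have 2: "perm_cong ((p @ [x]) @ (x # q)) (p @ x # q)" by simp
  show ?thesis using perm_cong.trans[OF 1 2] w by simp
qed

lemma prefix_absorb: "set w \<subseteq> perm_gens \<Longrightarrow> set v \<subseteq> set w \<Longrightarrow> perm_cong (v @ w) w"
proof (induction v)
  case Nil then show ?case by (auto intro: perm_cong.refl)
next
  case (Cons x v)
  have ih: "perm_cong (v @ w) w" using Cons by auto
  have 1: "perm_cong (x # v @ w) (x # w)" using cong_ctx_l[OF ih, of "[x]"] Cons by auto
  have 2: "perm_cong (x # w) w" by (rule absorb_mem) (use Cons in auto)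
  show ?case using perm_cong.trans[OF 1 2] by simp
qed

lemma set_eq_cong:
  assumes "set w \<subseteq> perm_gens" "set w' \<subseteq> perm_gens" "set w = set w'"
  shows "perm_cong w w'"
proof -
  have 1: "perm_cong (w' @ w) w" by (rule prefix_absorb) (use assms in auto)
  have 2: "perm_cong (w' @ w) (w @ w')" by (rule app_comm) (use assms in auto)
  have 3: "perm_cong (w @ w') w'" by (rule prefix_absorb) (use assms in auto)
  show ?thesis using perm_cong.trans[OF perm_cong.trans[OF perm_cong.sym[OF 1] 2] 3] .
qed

lemma zero_absorb:
  assumes J: "J \<in> perm_gens" and K: "K \<in> perm_gens" and JK: "J \<noteq> J \<inter> K" "J \<inter> K \<noteq> K"
  shows "set v \<subseteq> perm_gens \<Longrightarrow> perm_cong ([J, K] @ v) [J, K]"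
proof (induction v)
  case Nil then show ?case using J K by (auto intro: perm_cong.refl)
next
  case (Cons L v)
  have "perm_cong ([] @ [J, K] @ v) ([] @ [J, K, L] @ v)"
    by (rule perm_cong.step) (use J K JK Cons in \<open>auto intro: perm_relator.absorb\<close>)
  then have "perm_cong ([J, K] @ L # v) ([J, K] @ v)" by (auto intro: perm_cong.sym)
  then show ?case using Cons perm_cong.trans by fastforce
qed

lemma nonchain_cong:
  assumes g: "set w \<subseteq> perm_gens" and nc: "\<not> chainS (set w)"
  shows "\<exists>J K. J \<in> perm_gens \<and> K \<in> perm_gens \<and> J \<noteq> J \<inter> K \<and> J \<inter> K \<noteq> K \<and> perm_cong w [J, K]"
proof -
  obtain J K where JK: "J \<in> set w" "K \<in> set w" "\<not> J \<subseteq> K" "\<not> K \<subseteq> J"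
    using nc unfolding chainS_def by blast
  have gJK: "J \<in> perm_gens" "K \<in> perm_gens" using JK g by auto
  have ne: "J \<noteq> J \<inter> K" "J \<inter> K \<noteq> K" using JK by auto
  have 1: "perm_cong w ([J, K] @ w)" by (rule set_eq_cong) (use g JK in auto)
  have 2: "perm_cong ([J, K] @ w) [J, K]" by (rule zero_absorb[OF gJK ne g])
  show ?thesis using perm_cong.trans[OF 1 2] gJK ne by blast
qed

lemma zeros_cong:
  assumes J: "J \<in> perm_gens" "K \<in> perm_gens" "J \<noteq> J \<inter> K" "J \<inter> K \<noteq> K"
    and J': "J' \<in> perm_gens" "K' \<in> perm_gens" "J' \<noteq> J' \<inter> K'" "J' \<inter> K' \<noteq> K'"
  shows "perm_cong [J, K] [J', K']"
proof -
  have 1: "perm_cong ([J, K] @ [J', K']) [J, K]" by (rule zero_absorb) (use J J' in auto)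
  have 2: "perm_cong ([J, K] @ [J', K']) ([J', K'] @ [J, K])" by (rule app_comm) (use J J' in auto)
  have 3: "perm_cong ([J', K'] @ [J, K]) [J', K']" by (rule zero_absorb) (use J J' in auto)
  show ?thesis using perm_cong.trans[OF perm_cong.trans[OF perm_cong.sym[OF 1] 2] 3] .
qed

lemma nonchain_of: "J \<in> X \<Longrightarrow> K \<in> X \<Longrightarrow> J \<noteq> J \<inter> K \<Longrightarrow> J \<inter> K \<noteq> K \<Longrightarrow> \<not> chainS X"
  unfolding chainS_def by blast

lemma cong_Lset: "perm_cong w w' \<Longrightarrow> Lset (set w) = Lset (set w')"
proof (induction rule: perm_cong.induct)
  case (step l r u v)
  then show ?case
  proof (induction rule: perm_relator.cases)
    case (idem J) then show ?case by simp
  next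
    case (comm J K) then show ?case by (simp add: insert_commute)
  next
    case (absorb J K L)
    have "\<not> chainS (set (u @ l @ v))" "\<not> chainS (set (u @ r @ v))"
      by (rule nonchain_of[of J _ K]; use absorb in auto)+
    then show ?case using nonchain_empty by metis
  qed
qed auto


lemma faces:
  fixes m :: "nat \<Rightarrow> int" and F :: "(real ^ 'n::finite) set"
  assumes mono: "\<And>i j. 1 \<le> i \<Longrightarrow> i < j \<Longrightarrow> j \<le> CARD('n) \<Longrightarrow> m i < m j"
    and F: "F face_of permutohedron m" and Fne: "F \<noteq> {}"
  shows "\<exists>S. S \<subseteq> (perm_gens :: 'n set set) \<and> F = convex hull (perm_vertex m ` Lset S)"
proof -
  define P where "P = (permutohedron m :: (real ^ 'n) set)"
  define N where "N = CARD('n)"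
  have poly: "polytope P" unfolding polytope_def P_def permutohedron_def using finite_labs by blast
  have "F exposed_face_of P"
    using exposed_face_of_polyhedron[OF polytope_imp_polyhedron[OF poly]] F unfolding P_def by blast
  then obtain a b where ab: "P \<subseteq> {x. a \<bullet> x \<le> b}" "F = P \<inter> {x. a \<bullet> x = b}"
    unfolding exposed_face_of_def by blast
  define T where "T = {s\<in>(perm_labellings :: ('n \<Rightarrow> nat) set). a \<bullet> perm_vertex m s = b}"
  have vP: "perm_vertex m s \<in> P" if "s \<in> perm_labellings" for s
  proof -
    have "perm_vertex m s \<in> perm_vertex m ` perm_labellings" using that by blast
    then show ?thesis unfolding P_def permutohedron_def by (rule hull_subset[THEN subsetD])
  qed
  have "F = convex hull {v\<in>perm_vertex m ` perm_labellings. a \<bullet> v = b}"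
    unfolding ab(2) P_def permutohedron_def
  proof (rule hull_face_eq)
    show "finite (perm_vertex m ` perm_labellings)" using finite_labs by blast
    fix v assume "v \<in> perm_vertex m ` (perm_labellings :: ('n \<Rightarrow> nat) set)"
    then obtain s where "s \<in> perm_labellings" "v = perm_vertex m s" by blast
    then show "a \<bullet> v \<le> b" using vP ab(1) by blast
  qed
  also have "{v\<in>perm_vertex m ` perm_labellings. a \<bullet> v = b} = perm_vertex m ` T"
    unfolding T_def by blast
  finally have FT: "F = convex hull (perm_vertex m ` T)" .
  have "T \<noteq> {}"
  proof
    assume "T = {}"
    then show False using Fne FT by simp
  qed
  then obtain s0 where s0: "s0 \<in> T" by blast
  define Jt where "Jt t = {i. a $ i \<le> a $ t}" for t
  define S where "S = {Jt t | t. Jt t \<noteq> UNIV}"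
  have Sg: "S \<subseteq> perm_gens"
  proof
    fix J assume "J \<in> S"
    then obtain t where t: "J = Jt t" "Jt t \<noteq> UNIV" unfolding S_def by blast
    have "t \<in> J" using t unfolding Jt_def by simp
    then show "J \<in> perm_gens" using t unfolding perm_gens_def by blast
  qed
  define NI where "NI = {s\<in>(perm_labellings :: ('n \<Rightarrow> nat) set). \<forall>i j. a $ i < a $ j \<longrightarrow> s i < s j}"
  have LS: "Lset S = NI"
  proof (rule equalityI; rule subsetI)
    fix s assume s: "s \<in> Lset S"
    have "s i < s j" if "a $ i < a $ j" for i j
    proof -
      have "j \<notin> Jt i" "i \<in> Jt i" using that unfolding Jt_def by auto
      then have "Jt i \<in> S" unfolding S_def by blast
      then have "init s (Jt i)" using s unfolding Lset_def by blast
      then show "s i < s j" using \<open>j \<notin> Jt i\<close> \<open>i \<in> Jt i\<close> unfolding init_def by blast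
    qed
    then show "s \<in> NI" using s unfolding Lset_def NI_def by blast
  next
    fix s assume s: "s \<in> NI"
    have "init s J" if J: "J \<in> S" for J
    proof -
      obtain t where t: "J = Jt t" using J unfolding S_def by blast
      show ?thesis unfolding init_def
      proof (intro ballI allI impI)
        fix i j assume "i \<in> J" "j \<notin> J"
        then have "a $ i < a $ j" using t unfolding Jt_def by auto
        then show "s i < s j" using s unfolding NI_def by blast
      qed
    qed
    then show "s \<in> Lset S" using s unfolding Lset_def NI_def by blast
  qed
  have T_NI: "T \<subseteq> NI"
  proof
    fix s assume sT: "s \<in> T"
    have s: "s \<in> perm_labellings" and sb: "a \<bullet> perm_vertex m s = b" using sT unfolding T_def by auto
    have bs: "bij_betw s (UNIV::'n set) {1..N}" using s unfolding perm_labellings_def N_def by simp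
    have sinj: "inj s" using bs bij_betw_imp_inj_on by blast
    have srange: "s k \<in> {1..N}" for k using bs bij_betw_apply by fastforce
    have "s i < s j" if aij: "a $ i < a $ j" for i j
    proof (rule ccontr)
      assume nl: "\<not> s i < s j"
      have ij: "i \<noteq> j" using aij by auto
      then have "s i \<noteq> s j" using sinj by (simp add: inj_eq)
      then have "s j < s i" using nl by simp
      then have mlt: "m (s j) < m (s i)" using mono[of "s j" "s i"] srange[of i] srange[of j] by (simp add: N_def)
      define s' where "s' = s \<circ> Transposition.transpose i j"
      have "bij_betw s' (UNIV::'n set) {1..N}"
        unfolding s'_def by (rule bij_betw_trans[OF _ bs]) (simp add: bij_def)
      then have s'l: "s' \<in> perm_labellings" unfolding perm_labellings_def N_def by simp
      have le: "a \<bullet> perm_vertex m s' \<le> b" using vP[OF s'l] ab(1) by blast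
      define f where "f k = a $ k * (real_of_int (m (s' k)) - real_of_int (m (s k)))" for k
      have "a \<bullet> perm_vertex m s' - a \<bullet> perm_vertex m s = (\<Sum>k\<in>UNIV. f k)"
        unfolding inner_vec_def perm_vertex_def f_def by (simp add: sum_subtractf right_diff_distrib)
      also have "\<dots> = (\<Sum>k\<in>{i,j}. f k)"
        by (rule sum.mono_neutral_right) (auto simp: f_def s'_def)
      also have "\<dots> = f i + f j" using ij by simp
      also have "\<dots> = (a $ j - a $ i) * (real_of_int (m (s i)) - real_of_int (m (s j)))"
        unfolding f_def s'_def using ij by (simp add: algebra_simps)
      also have "\<dots> > 0" using aij mlt by simp
      finally show False using le sb by simp
    qed
    then show "s \<in> NI" using s unfolding NI_def by blast
  qed
  have charac: "a $ (inv s k) \<le> a $ t \<longleftrightarrow> k \<le> card (Jt t)"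
    if s: "s \<in> NI" and k: "k \<in> {1..N}" for s k t
  proof -
    have sl: "s \<in> perm_labellings" using s unfolding NI_def by blast
    have bs: "bij_betw s (UNIV::'n set) {1..N}" using sl unfolding perm_labellings_def N_def by simp
    have sinj: "inj s" using bs bij_betw_imp_inj_on by blast
    have "k \<in> range s" using bs k bij_betw_imp_surj_on by blast
    then have sk: "s (inv s k) = k" by (simp add: f_inv_into_f)
    have "init s (Jt t)" unfolding init_def
    proof (intro ballI allI impI)
      fix i j assume "i \<in> Jt t" "j \<notin> Jt t"
      then have "a $ i < a $ j" unfolding Jt_def by auto
      then show "s i < s j" using s unfolding NI_def by blast
    qed
    then have im: "s ` Jt t = {1..card (Jt t)}" using init_iff[OF sl] by blast
    have "a $ (inv s k) \<le> a $ t \<longleftrightarrow> inv s k \<in> Jt t" unfolding Jt_def by simp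
    also have "\<dots> \<longleftrightarrow> s (inv s k) \<in> s ` Jt t" using sinj by (simp add: inj_image_mem_iff)
    also have "\<dots> \<longleftrightarrow> k \<le> card (Jt t)" unfolding sk im using k by simp
    finally show ?thesis .
  qed
  have valeq: "a \<bullet> perm_vertex m s = (\<Sum>k\<in>{1..N}. a $ (inv s k) * real_of_int (m k))"
    if s: "s \<in> NI" for s
  proof -
    have sl: "s \<in> perm_labellings" using s unfolding NI_def by blast
    have bs: "bij_betw s (UNIV::'n set) {1..N}" using sl unfolding perm_labellings_def N_def by simp
    have sinj: "inj s" using bs bij_betw_imp_inj_on by blast
    have "a \<bullet> perm_vertex m s = (\<Sum>i\<in>UNIV. (\<lambda>k. a $ (inv s k) * real_of_int (m k)) (s i))"
      unfolding inner_vec_def perm_vertex_def using sinj by (simp add: inv_f_f)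
    also have "\<dots> = (\<Sum>k\<in>{1..N}. a $ (inv s k) * real_of_int (m k))"
      by (rule sum.reindex_bij_betw[OF bs])
    finally show ?thesis .
  qed
  have NI_T: "NI \<subseteq> T"
  proof
    fix s assume s: "s \<in> NI"
    have s0N: "s0 \<in> NI" using s0 T_NI by blast
    have "a $ (inv s k) = a $ (inv s0 k)" if k: "k \<in> {1..N}" for k
    proof -
      have "a $ (inv s k) \<le> a $ (inv s0 k)"
        using charac[OF s k, of "inv s0 k"] charac[OF s0N k, of "inv s0 k"] by simp
      moreover have "a $ (inv s0 k) \<le> a $ (inv s k)"
        using charac[OF s k, of "inv s k"] charac[OF s0N k, of "inv s k"] by simp
      ultimately show ?thesis by simp
    qed
    then have "a \<bullet> perm_vertex m s = a \<bullet> perm_vertex m s0"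
      unfolding valeq[OF s] valeq[OF s0N] by (intro sum.cong) auto
    also have "\<dots> = b" using s0 unfolding T_def by simp
    finally show "s \<in> T" using s unfolding T_def NI_def by blast
  qed
  have "T = Lset S" using T_NI NI_T LS by blast
  then show ?thesis using FT Sg by blast
qed


theorem mainTheorem9:
  fixes m :: "nat \<Rightarrow> int"
  assumes card: "CARD('n::finite) \<ge> 2"
    and m_nonneg: "0 \<le> m 1"
    and m_incr: "\<And>i j. 1 \<le> i \<Longrightarrow> i < j \<Longrightarrow> j \<le> CARD('n) \<Longrightarrow> m i < m j"
  shows "(\<forall>J\<in>(perm_gens :: 'n set set). perm_facet m J face_of permutohedron m)
    \<and> (\<forall>w. set w \<subseteq> (perm_gens :: 'n set set) \<longrightarrow> perm_eval m w face_of permutohedron m)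
    \<and> (\<forall>F. F face_of (permutohedron m :: (real ^ 'n) set) \<longrightarrow>
          (\<exists>w. set w \<subseteq> perm_gens \<and> perm_eval m w = F))
    \<and> (\<forall>w1 w2. set w1 \<subseteq> (perm_gens :: 'n set set) \<longrightarrow> set w2 \<subseteq> perm_gens \<longrightarrow>
          (perm_eval m w1 = perm_eval m w2 \<longleftrightarrow> perm_cong w1 w2))"
proof -
  have convP: "convex (permutohedron m :: (real ^ 'n) set)"
    unfolding permutohedron_def by (rule convex_convex_hull)
  have facet_face: "perm_facet m J face_of permutohedron m" for J :: "'n set"
  proof -
    have "(permutohedron m \<inter> {x. ind J \<bullet> x = cJ m J}) face_of permutohedron m"
      by (rule face_of_Int_supporting_hyperplane_ge[OF convP]) (rule P_ge[where m=m, OF m_incr])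
    then show ?thesis using facet_eq[where m=m, OF m_incr, of J] by simp
  qed
  have A2: "perm_eval m w face_of permutohedron m" for w :: "'n set list"
  proof (induction w)
    case Nil
    have "perm_eval m ([] :: 'n set list) = permutohedron m" by (simp add: perm_eval_def)
    then show ?case using face_of_refl[OF convP] by simp
  next
    case (Cons J w)
    have "perm_eval m (J # w) = perm_eval m w \<inter> perm_facet m J" by (auto simp: perm_eval_def)
    then show ?case using face_of_Int[OF Cons facet_face] by simp
  qed
  have Lsub: "Lset S \<subseteq> perm_labellings" for S :: "'n set set" by (auto simp: Lset_def)
  have A3: "\<exists>w. set w \<subseteq> perm_gens \<and> perm_eval m w = F"
    if F: "F face_of (permutohedron m :: (real ^ 'n) set)" for F
  proof (cases "F = {}")
    case True
    obtain i :: 'n where True by blast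
    have "UNIV \<noteq> {i}"
    proof
      assume u: "UNIV = {i}"
      have "CARD('n) = card {i}" by (simp only: u)
      then have "CARD('n) = 1" by simp
      then show False using card by simp
    qed
    then obtain k :: 'n where k: "k \<noteq> i" by blast
    have g: "{i} \<in> perm_gens" "{k} \<in> perm_gens" using k unfolding perm_gens_def by auto
    have "\<not> chainS (set [{i}, {k}])" using k unfolding chainS_def by auto
    then have "Lset (set [{i}, {k}]) = {}" by (rule nonchain_empty)
    then have "perm_eval m [{i}, {k}] = {}" using eval_eq[where m=m, OF m_incr, of "[{i}, {k}]"] by simp
    then show ?thesis using g True by (intro exI[of _ "[{i}, {k}]"]) auto
  next
    case False
    obtain S where S: "S \<subseteq> (perm_gens :: 'n set set)" "F = convex hull (perm_vertex m ` Lset S)"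
      using faces[where m=m, OF m_incr F False] by blast
    have "finite S" by (rule finite_subset[of _ UNIV]) auto
    then obtain w where w: "set w = S" using finite_list by blast
    have "perm_eval m w = F" using eval_eq[where m=m, OF m_incr, of w] w S by simp
    then show ?thesis using w S by blast
  qed
  have A4: "perm_eval m w1 = perm_eval m w2 \<longleftrightarrow> perm_cong w1 w2"
    if g1: "set w1 \<subseteq> (perm_gens :: 'n set set)" and g2: "set w2 \<subseteq> perm_gens" for w1 w2
  proof
    assume "perm_cong w1 w2"
    then have "Lset (set w1) = Lset (set w2)" by (rule cong_Lset)
    then show "perm_eval m w1 = perm_eval m w2"
      using eval_eq[where m=m, OF m_incr, of w1] eval_eq[where m=m, OF m_incr, of w2] by simp
  next
    assume eq: "perm_eval m w1 = perm_eval m w2"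
    then have eqh: "convex hull (perm_vertex m ` Lset (set w1)) = convex hull (perm_vertex m ` Lset (set w2))"
      using eval_eq[where m=m, OF m_incr, of w1] eval_eq[where m=m, OF m_incr, of w2] by simp
    have "Lset (set w1) \<subseteq> Lset (set w2)" by (rule hull_sub[where m=m, OF m_incr Lsub Lsub eqh])
    moreover have "Lset (set w2) \<subseteq> Lset (set w1)" by (rule hull_sub[where m=m, OF m_incr Lsub Lsub eqh[symmetric]])
    ultimately have LL: "Lset (set w1) = Lset (set w2)" by blast
    show "perm_cong w1 w2"
    proof (cases "chainS (set w1)")
      case True
      then have "Lset (set w1) \<noteq> {}" by (rule chain_nonempty)
      then have ch2: "chainS (set w2)" using LL nonchain_empty by metis
      have sub: "set a \<subseteq> set b"
        if ga: "set a \<subseteq> (perm_gens :: 'n set set)" and chb: "chainS (set b)"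
          and L: "Lset (set a) = Lset (set b)" for a b
      proof
        fix J assume J: "J \<in> set a"
        show "J \<in> set b"
        proof (rule ccontr)
          assume "J \<notin> set b"
          moreover have "J \<noteq> {}" "J \<noteq> UNIV" using J ga unfolding perm_gens_def by auto
          ultimately obtain s where s: "s \<in> Lset (set b)" "\<not> init s J"
            using chain_separate[OF chb] by blast
          then have "s \<in> Lset (set a)" using L by simp
          then show False using s J unfolding Lset_def by blast
        qed
      qed
      have "set w1 = set w2" using sub[OF g1 ch2 LL] sub[OF g2 True LL[symmetric]] by blast
      then show ?thesis using set_eq_cong g1 g2 by blast
    next
      case False
      then have "Lset (set w1) = {}" by (rule nonchain_empty)
      then have nc2: "\<not> chainS (set w2)" using LL chain_nonempty by metis
      obtain J K where JK: "J \<in> perm_gens" "K \<in> perm_gens" "J \<noteq> J \<inter> K" "J \<inter> K \<noteq> K" "perm_cong w1 [J, K]"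
        using nonchain_cong[OF g1 False] by blast
      obtain J' K' where JK': "J' \<in> perm_gens" "K' \<in> perm_gens" "J' \<noteq> J' \<inter> K'" "J' \<inter> K' \<noteq> K'" "perm_cong w2 [J', K']"
        using nonchain_cong[OF g2 nc2] by blast
      have "perm_cong [J, K] [J', K']" by (rule zeros_cong) (use JK JK' in auto)
      then show ?thesis using JK(5) JK'(5) by (blast intro: perm_cong.trans perm_cong.sym)
    qed
  qed
  show ?thesis using facet_face A2 A3 A4 by blast
qed

end
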